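(* Let $\alpha,\beta>0$ and let $\lambda\in\mathbb{R}$, $a,b>0$ with $-b<\frac{\lambda}{2}<b$. Let $X,Y$ be independent random variables with $X\sim \mathrm{K}(\lambda,a,b;\alpha,1)$ and $Y\sim\mathrm{K}(-\lambda,a,b;\beta,1)$, and set $(U,V)=H_{II}^{+,\alpha,\beta}(X,Y)$. Then $U$ and $V$ are independent, with $U\sim\mathrm{K}(-\lambda,a,b;\alpha,1)$ and $V\sim \mathrm{K}(\lambda,a,b;\beta,1)$.
   Context: $\mathbb{R}_+=(0,\infty)$. For $\alpha,\beta>0$ the map $H_{II}^{+,\alpha,\beta}:\mathbb{R}_+^2\to\mathbb{R}_+^2$ is $$H_{II}^{+,\alpha,\beta}(x,y)=\left(\frac{y}{\alpha}\,\frac{\beta+\alpha x+\beta y}{1+x+y},\ \frac{x}{\beta}\,\frac{\alpha+\alpha x+\beta y}{1+x+y}\right).$$ For $p,q>0$, $a>0$ and $\lambda,b\in\mathbb{R}$ with $-b<\frac{\lambda}{2}$, the Kummer distribution of type 2 $\mathrm{K}(\lambda,a,b;p,q)$ is the probability distribution on $\mathbb{R}_+$ with density proportional to $x^{\lambda-1}e^{-apx}(1+qx^{-1})^{-b+\frac{\lambda}{2}}$, $x\in\mathbb{R}_+$. *)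

theory Defs
  imports "HOL-Probability.Probability"
begin

definition H_II_plus :: "real \<Rightarrow> real \<Rightarrow> real \<times> real \<Rightarrow> real \<times> real" where
  "H_II_plus \<alpha> \<beta> = (\<lambda>(x, y).
     ((y / \<alpha>) * ((\<beta> + \<alpha> * x + \<beta> * y) / (1 + x + y)),
      (x / \<beta>) * ((\<alpha> + \<alpha> * x + \<beta> * y) / (1 + x + y))))"

definition kummer2_dens :: "real \<Rightarrow> real \<Rightarrow> real \<Rightarrow> real \<Rightarrow> real \<Rightarrow> real \<Rightarrow> real" where
  "kummer2_dens lam a b p q x =
     (if 0 < x then x powr (lam - 1) * exp (- a * p * x) * (1 + q / x) powr (- b + lam / 2)
      else 0)"

definition kummer2 :: "real \<Rightarrow> real \<Rightarrow> real \<Rightarrow> real \<Rightarrow> real \<Rightarrow> real measure" where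
  "kummer2 lam a b p q =
     density lborel (\<lambda>x. ennreal (kummer2_dens lam a b p q x /
                                   (\<integral>t. kummer2_dens lam a b p q t \<partial>lborel)))"

end

theory Submission
  imports Defs
begin

lemma kd_pos: "0 < (x::real) \<Longrightarrow> 0 < kummer2_dens lam a b p 1 x"
proof -
  assume x: "0 < x"
  then have "1 + 1/x > 0" by (simp add: add_pos_pos)
  then show ?thesis using x by (simp add: kummer2_dens_def)
qed

lemma pw:
  fixes x y \<alpha> \<beta> lam a b :: real
  assumes x: "0 < x" and y: "0 < y" and al: "\<alpha> > 0" and be: "\<beta> > 0"
  defines "t \<equiv> \<alpha> * x + \<beta> * y" and "S \<equiv> 1 + x + y"
  defines "u \<equiv> y * (\<beta> + t) / (\<alpha> * S)" and "v \<equiv> x * (\<alpha> + t) / (\<beta> * S)"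
  defines "J \<equiv> (\<alpha> + t) * (\<beta> + t) / (\<alpha> * \<beta> * S^2)"
  shows "kummer2_dens lam a b \<alpha> 1 x * kummer2_dens (-lam) a b \<beta> 1 y =
         (\<beta>/\<alpha>) powr lam * kummer2_dens (-lam) a b \<alpha> 1 u * kummer2_dens lam a b \<beta> 1 v * J"
proof -
  have t: "t > 0" and S: "S > 0" using x y al be by (auto simp: t_def S_def intro!: add_pos_pos)
  have u: "u > 0" and v: "v > 0" and J: "J > 0" using x y al be t S by (auto simp: u_def v_def J_def)
  have e: "\<alpha> * u + \<beta> * v = \<alpha> * x + \<beta> * y"
  proof -
    have "\<alpha> * u + \<beta> * v = (y * (\<beta> + t) + x * (\<alpha> + t)) / S"
      using al be S by (simp add: u_def v_def field_simps)
    also have "y * (\<beta> + t) + x * (\<alpha> + t) = t * S" by (simp add: t_def S_def algebra_simps)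
    finally show ?thesis using S by (simp add: t_def)
  qed
  have u1: "1 + u = (1 + y) * (\<alpha> + t) / (\<alpha> * S)"
  proof -
    have "(1 + y) * (\<alpha> + t) = \<alpha> * S + y * (\<beta> + t)" by (simp add: t_def S_def algebra_simps)
    then show ?thesis using al S by (simp add: u_def field_simps)
  qed
  have v1: "1 + v = (1 + x) * (\<beta> + t) / (\<beta> * S)"
  proof -
    have "(1 + x) * (\<beta> + t) = \<beta> * S + x * (\<alpha> + t)" by (simp add: t_def S_def algebra_simps)
    then show ?thesis using be S by (simp add: v_def field_simps)
  qed
  have px: "1 + 1/x > 0" "1 + 1/y > 0" "1 + 1/u > 0" "1 + 1/v > 0"
    using x y u v by (simp_all add: add_pos_pos)
  have lx: "ln (1 + 1/x) = ln (1+x) - ln x" using x by (simp add: field_simps ln_div)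
  have ly: "ln (1 + 1/y) = ln (1+y) - ln y" using y by (simp add: field_simps ln_div)
  have lu0: "ln (1 + 1/u) = ln (1+u) - ln u" using u by (simp add: field_simps ln_div)
  have lv0: "ln (1 + 1/v) = ln (1+v) - ln v" using v by (simp add: field_simps ln_div)
  have lu: "ln u = ln y + ln (\<beta> + t) - ln \<alpha> - ln S" using y t S al be
    unfolding u_def by (simp add: ln_div ln_mult)
  have lv: "ln v = ln x + ln (\<alpha> + t) - ln \<beta> - ln S" using x t S al be
    unfolding v_def by (simp add: ln_div ln_mult)
  have lu1: "ln (1+u) = ln (1+y) + ln (\<alpha> + t) - ln \<alpha> - ln S" using y t S al be
    unfolding u1 by (simp add: ln_div ln_mult)
  have lv1: "ln (1+v) = ln (1+x) + ln (\<beta> + t) - ln \<beta> - ln S" using x t S al be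
    unfolding v1 by (simp add: ln_div ln_mult)
  have lJ: "ln J = ln (\<alpha> + t) + ln (\<beta> + t) - ln \<alpha> - ln \<beta> - 2 * ln S" using t S al be
    unfolding J_def by (simp add: ln_div ln_mult ln_realpow)
  have lc: "ln ((\<beta>/\<alpha>) powr lam) = lam * (ln \<beta> - ln \<alpha>)" using al be by (simp add: ln_powr ln_div)
  have pL: "kummer2_dens lam a b \<alpha> 1 x * kummer2_dens (-lam) a b \<beta> 1 y > 0"
    using x y by (simp add: kd_pos)
  have pR: "(\<beta>/\<alpha>) powr lam * kummer2_dens (-lam) a b \<alpha> 1 u * kummer2_dens lam a b \<beta> 1 v * J > 0"
    using u v J al be by (simp add: kd_pos)
  have "ln (kummer2_dens lam a b \<alpha> 1 x * kummer2_dens (-lam) a b \<beta> 1 y) =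
        (lam - 1) * ln x - a * \<alpha> * x + (- b + lam/2) * (ln (1+x) - ln x)
      + (-lam - 1) * ln y - a * \<beta> * y + (- b + -lam/2) * (ln (1+y) - ln y)"
    using x y px by (simp add: kummer2_dens_def ln_mult ln_powr lx ly)
  also have "\<dots> = ln ((\<beta>/\<alpha>) powr lam) + ((-lam - 1) * ln u - a * \<alpha> * u + (- b + -lam/2) * (ln (1+u) - ln u))
      + ((lam - 1) * ln v - a * \<beta> * v + (- b + lam/2) * (ln (1+v) - ln v)) + ln J"
  proof -
    have "a * \<alpha> * u + a * \<beta> * v = a * \<alpha> * x + a * \<beta> * y" using e by (metis distrib_left mult.assoc)
    then show ?thesis unfolding lc lu lv lu1 lv1 lJ by (simp add: algebra_simps)
  qed
  also have "\<dots> = ln ((\<beta>/\<alpha>) powr lam * kummer2_dens (-lam) a b \<alpha> 1 u * kummer2_dens lam a b \<beta> 1 v * J)"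
    using u v J al be px by (simp add: kummer2_dens_def ln_mult ln_powr lu0 lv0)
  finally show ?thesis using pL pR by simp
qed


lemma kd_nonneg: "0 \<le> kummer2_dens lam a b p q x"
  by (simp add: kummer2_dens_def)

lemma kd_nonpos: "x \<le> 0 \<Longrightarrow> kummer2_dens lam a b p q x = 0"
  by (simp add: kummer2_dens_def)

lemma kd_meas[measurable]: "kummer2_dens lam a b p q \<in> borel_measurable borel"
  unfolding kummer2_dens_def by measurable

lemma mob_deriv:
  fixes \<alpha> \<beta> s x :: real
  assumes d: "\<beta>+s+(\<beta>-\<alpha>)*x \<noteq> 0" and al: "\<alpha> > 0"
  shows "((\<lambda>x. - ((\<beta>+s)*(s-\<alpha>*x)/(\<alpha>*(\<beta>+s+(\<beta>-\<alpha>)*x)))) has_real_derivative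
          \<beta>*(\<alpha>+s)*(\<beta>+s)/(\<alpha>*(\<beta>+s+(\<beta>-\<alpha>)*x)^2)) (at x)"
proof -
  have 1: "((\<lambda>x. - ((\<beta>+s)*(s-\<alpha>*x)/(\<alpha>*(\<beta>+s+(\<beta>-\<alpha>)*x)))) has_real_derivative
     - (((\<beta>+s)*(-\<alpha>) * (\<alpha>*(\<beta>+s+(\<beta>-\<alpha>)*x)) - (\<beta>+s)*(s-\<alpha>*x) * (\<alpha>*(\<beta>-\<alpha>))) / (\<alpha>*(\<beta>+s+(\<beta>-\<alpha>)*x))^2)) (at x)"
    using d al by (auto intro!: derivative_eq_intros simp: power2_eq_square)
  define D where "D = \<beta>+s+(\<beta>-\<alpha>)*x"
  have N: "(\<beta>+s)*(-\<alpha>) * (\<alpha>*D) - (\<beta>+s)*(s-\<alpha>*x) * (\<alpha>*(\<beta>-\<alpha>)) = - (\<alpha>*(\<beta>*(\<beta>+s)*(\<alpha>+s)))"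
    by (simp add: D_def algebra_simps)
  have D0: "D \<noteq> 0" using d by (simp add: D_def)
  have "- (((\<beta>+s)*(-\<alpha>) * (\<alpha>*D) - (\<beta>+s)*(s-\<alpha>*x) * (\<alpha>*(\<beta>-\<alpha>))) / (\<alpha>*D)^2)
      = \<beta>*(\<alpha>+s)*(\<beta>+s)/(\<alpha>*D^2)"
    unfolding N using D0 al by (simp add: field_simps power2_eq_square)
  then show ?thesis using 1 unfolding D_def by simp
qed

locale kum = fixes \<alpha> \<beta> lam a b :: real assumes al: "0<\<alpha>" and be: "0<\<beta>"
begin
abbreviation "fX \<equiv> kummer2_dens lam a b \<alpha> 1"
abbreviation "fY \<equiv> kummer2_dens (-lam) a b \<beta> 1"
abbreviation "fU \<equiv> kummer2_dens (-lam) a b \<alpha> 1"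
abbreviation "fV \<equiv> kummer2_dens lam a b \<beta> 1"

lemma mob:
  fixes h :: "real \<times> real \<Rightarrow> real" and s :: real
  assumes hm[measurable]: "h \<in> borel_measurable borel" and h0: "\<And>z. h z \<ge> 0" and s: "s > 0"
  shows "(\<integral>\<^sup>+x. ennreal (h (H_II_plus \<alpha> \<beta> (x, (s-\<alpha> * x)/\<beta>)) * fX x * fY ((s-\<alpha> * x)/\<beta>)) \<partial>lborel)
     = ennreal ((\<beta>/\<alpha>) powr lam) * (\<integral>\<^sup>+u. ennreal (h (u, (s-\<alpha> * u)/\<beta>) * fU u * fV ((s-\<alpha> * u)/\<beta>)) \<partial>lborel)"
proof -
  define Q where "Q u = h (u, (s-\<alpha> * u)/\<beta>) * fU u * fV ((s-\<alpha> * u)/\<beta>)" for u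
  define m where "m x = (\<beta>+s)*(s-\<alpha> * x)/(\<alpha> * (\<beta>+s+(\<beta>-\<alpha>)*x))" for x
  define G where "G x = \<beta> * (\<alpha>+s)*(\<beta>+s)/(\<alpha> * (\<beta>+s+(\<beta>-\<alpha>)*x)^2)" for x
  have Qm[measurable]: "Q \<in> borel_measurable borel" unfolding Q_def by measurable
  have Q0: "Q u \<ge> 0" for u unfolding Q_def by (intro mult_nonneg_nonneg h0 kd_nonneg)
  have den: "\<beta>+s+(\<beta>-\<alpha>)*x > 0" if "x \<in> {0..s/\<alpha>}" for x
  proof (cases "\<beta> \<ge> \<alpha>")
    case True then show ?thesis using that be s by (simp add: add_pos_nonneg)
  next
    case False
    have "(\<alpha>-\<beta>)*x \<le> (\<alpha>-\<beta>)*(s/\<alpha>)" using that False by (intro mult_left_mono) auto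
    also have "(\<alpha>-\<beta>)*(s/\<alpha>) = s - \<beta> * s / \<alpha>" using al by (simp add: field_simps)
    finally have "(\<alpha>-\<beta>)*x \<le> s - \<beta> * s / \<alpha>" .
    moreover have "\<beta> * s / \<alpha> > 0" using al be s by simp
    ultimately show ?thesis using be by (simp add: algebra_simps)
  qed
  have deriv: "((\<lambda>x. - m x) has_real_derivative G x) (at x)" if "x \<in> {0..s/\<alpha>}" for x
  proof -
    have d: "\<beta>+s+(\<beta>-\<alpha>)*x \<noteq> 0" using den[OF that] by simp
    show ?thesis unfolding m_def G_def using mob_deriv[OF d al] by simp
  qed
  have nz: "\<alpha> * (\<beta>+s+(\<beta>-\<alpha>)*x)^2 \<noteq> 0" if "x \<in> {0..s/\<alpha>}" for x
    using den[OF that] al by simp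
  have contG: "continuous_on {0..s/\<alpha>} G"
    unfolding G_def by (intro continuous_on_divide continuous_intros) (use nz in auto)
  have G0: "G x \<ge> 0" if "x \<in> {0..s/\<alpha>}" for x
    unfolding G_def using al be s by simp
  have bs: "\<beta> + s \<noteq> 0" using be s by simp
  have m0: "- m 0 = - (s/\<alpha>)" using al bs by (simp add: m_def)
  have m1: "- m (s/\<alpha>) = 0" using al by (simp add: m_def)
  have sub: "(\<integral>\<^sup>+w. ennreal (Q (- w) * indicator {- (s/\<alpha>)..0} w) \<partial>lborel) =
             (\<integral>\<^sup>+x. ennreal (Q (- (- m x)) * G x * indicator {0..s/\<alpha>} x) \<partial>lborel)"
  proof -
    have sm: "set_borel_measurable borel {- m 0 .. - m (s/\<alpha>)} (\<lambda>w. Q (-w))"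
      unfolding set_borel_measurable_def by measurable
    have sa: "0 \<le> s/\<alpha>" using al s by simp
    show ?thesis
      using nn_integral_substitution[where g="\<lambda>x. - m x" and a=0 and b="s/\<alpha>" and f="\<lambda>w. Q(-w)" and g'=G, OF sm deriv contG G0 sa]
      unfolding m0 m1 by simp
  qed
  define c where "c = (\<beta>/\<alpha>) powr lam"
  have c0: "c \<ge> 0" by (simp add: c_def)
  have a0: "\<alpha> \<noteq> 0" and b0: "\<beta> \<noteq> 0" using al be by auto
  have pt: "ennreal (h (H_II_plus \<alpha> \<beta> (x, (s-\<alpha> * x)/\<beta>)) * fX x * fY ((s-\<alpha> * x)/\<beta>))
     = ennreal c * ennreal (Q (- (- m x)) * G x * indicator {0..s/\<alpha>} x)" for x
  proof (cases "0 < x \<and> x < s/\<alpha>")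
    case True
    define y where "y = (s-\<alpha> * x)/\<beta>"
    have x: "0 < x" and y: "0 < y" using True al be by (auto simp: y_def field_simps)
    have t: "\<alpha> * x + \<beta> * y = s" using b0 by (simp add: y_def)
    define T where "T = 1 + x + y"
    have S: "T > 0" using x y by (simp add: T_def)
    then have S': "T \<noteq> 0" by simp
    have D: "\<beta> * T = \<beta>+s+(\<beta>-\<alpha>)*x" using b0 by (simp add: T_def y_def field_simps)
    define u where "u = y * (\<beta> + (\<alpha> * x+\<beta> * y)) / (\<alpha> * T)"
    define v where "v = x * (\<alpha> + (\<alpha> * x+\<beta> * y)) / (\<beta> * T)"
    define J where "J = (\<alpha> + (\<alpha> * x+\<beta> * y)) * (\<beta> + (\<alpha> * x+\<beta> * y)) / (\<alpha> * \<beta> * T^2)"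
    have H: "H_II_plus \<alpha> \<beta> (x, y) = (u, v)"
      unfolding H_II_plus_def u_def v_def T_def by (simp add: times_divide_times_eq add.assoc)
    have um: "u = m x"
    proof -
      have "m x = (\<beta>+s)*(\<beta> * y)/(\<alpha> * (\<beta> * T))" unfolding m_def D using b0 by (simp add: y_def)
      also have "\<dots> = u" unfolding u_def t using a0 b0 S' by (simp add: field_simps)
      finally show ?thesis by simp
    qed
    have uv: "\<alpha> * u + \<beta> * v = s"
    proof -
      have "\<alpha> * u + \<beta> * v = (y*(\<beta>+s) + x*(\<alpha>+s)) / T"
        unfolding u_def v_def t using a0 b0 S' by (simp add: field_simps)
      also have "y*(\<beta>+s) + x*(\<alpha>+s) = s*T" unfolding T_def t[symmetric] by (simp add: algebra_simps)
      finally show ?thesis using S' by simp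
    qed
    have vdef: "v = (s - \<alpha> * u)/\<beta>"
    proof -
      have "\<beta> * v = s - \<alpha> * u" using uv by linarith
      then show ?thesis using b0 by (metis nonzero_mult_div_cancel_left)
    qed
    have GJ: "G x = J"
    proof -
      have "G x = \<beta> * (\<alpha>+s)*(\<beta>+s)/(\<alpha> * (\<beta> * T)^2)" by (simp only: G_def D)
      also have "\<dots> = J" unfolding J_def t using a0 b0 S' by (simp add: field_simps power2_eq_square)
      finally show ?thesis .
    qed
    have P: "fX x * fY y = c * fU u * fV v * J"
      using pw[OF x y al be, where lam=lam and a=a and b=b] unfolding c_def u_def v_def J_def T_def by simp
    have ind: "indicator {0..s/\<alpha>} x = (1::real)" using True by simp
    have E: "h (H_II_plus \<alpha> \<beta> (x, y)) * fX x * fY y = c * (Q (- (- m x)) * G x * indicator {0..s/\<alpha>} x)"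
    proof -
      have "h (H_II_plus \<alpha> \<beta> (x, y)) * fX x * fY y = h (u, v) * (fX x * fY y)" by (simp add: H)
      also have "\<dots> = h (u, v) * (c * fU u * fV v * J)" by (simp only: P)
      also have "\<dots> = c * (Q (- (- m x)) * G x * indicator {0..s/\<alpha>} x)"
        unfolding ind GJ minus_minus um[symmetric] Q_def vdef[symmetric] by simp
      finally show ?thesis .
    qed
    then have E': "h (H_II_plus \<alpha> \<beta> (x, (s-\<alpha> * x)/\<beta>)) * fX x * fY ((s-\<alpha> * x)/\<beta>) = c * (Q (- (- m x)) * G x * indicator {0..s/\<alpha>} x)"
      unfolding y_def .
    show ?thesis unfolding E' by (rule ennreal_mult'[OF c0])
  next
    case False
    have L: "fX x * fY ((s-\<alpha> * x)/\<beta>) = 0"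
    proof (cases "x \<le> 0")
      case True then show ?thesis by (simp add: kd_nonpos)
    next
      case False
      with \<open>\<not> (0 < x \<and> x < s/\<alpha>)\<close> have "s/\<alpha> \<le> x" by simp
      then have "s - \<alpha> * x \<le> 0" using al by (simp add: field_simps)
      then have "(s-\<alpha> * x)/\<beta> \<le> 0" using be by (simp add: divide_nonpos_pos)
      then show ?thesis by (simp add: kd_nonpos)
    qed
    have R: "Q (- (- m x)) * G x * indicator {0..s/\<alpha>} x = 0"
    proof (cases "x = 0 \<or> x = s/\<alpha>")
      case True
      then show ?thesis
      proof
        assume x: "x = 0"
        have "m 0 = s/\<alpha>" using m0 by simp
        then show ?thesis using x al by (simp add: Q_def kd_nonpos)
      next
        assume x: "x = s/\<alpha>"
        have "m x = 0" using al x by (simp add: m_def)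
        then show ?thesis by (simp add: Q_def kd_nonpos)
      qed
    next
      case False
      with \<open>\<not> (0 < x \<and> x < s/\<alpha>)\<close> have "x \<notin> {0..s/\<alpha>}" by auto
      then show ?thesis by simp
    qed
    have L': "h (H_II_plus \<alpha> \<beta> (x, (s-\<alpha> * x)/\<beta>)) * fX x * fY ((s-\<alpha> * x)/\<beta>) = 0"
      by (metis L mult.assoc mult_zero_right)
    show ?thesis unfolding L' R by simp
  qed
  have mm[measurable]: "m \<in> borel_measurable borel" unfolding m_def by measurable
  have Gm[measurable]: "G \<in> borel_measurable borel" unfolding G_def by measurable
  have "(\<integral>\<^sup>+x. ennreal (h (H_II_plus \<alpha> \<beta> (x, (s-\<alpha> * x)/\<beta>)) * fX x * fY ((s-\<alpha> * x)/\<beta>)) \<partial>lborel)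
     = (\<integral>\<^sup>+x. ennreal c * ennreal (Q (- (- m x)) * G x * indicator {0..s/\<alpha>} x) \<partial>lborel)"
    by (simp only: pt)
  also have "\<dots> = ennreal c * (\<integral>\<^sup>+x. ennreal (Q (- (- m x)) * G x * indicator {0..s/\<alpha>} x) \<partial>lborel)"
    by (rule nn_integral_cmult) measurable
  also have "\<dots> = ennreal c * (\<integral>\<^sup>+w. ennreal (Q (- w) * indicator {- (s/\<alpha>)..0} w) \<partial>lborel)"
    by (simp only: sub)
  also have "(\<integral>\<^sup>+w. ennreal (Q (- w) * indicator {- (s/\<alpha>)..0} w) \<partial>lborel)
     = (\<integral>\<^sup>+u. ennreal (Q u * indicator {0..s/\<alpha>} u) \<partial>lborel)"
    by (subst nn_integral_real_affine[where c="-1" and t=0]) (auto intro!: nn_integral_cong simp: indicator_def)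
  also have "\<dots> = (\<integral>\<^sup>+u. ennreal (Q u) \<partial>lborel)"
  proof (rule nn_integral_cong)
    fix u :: real
    show "ennreal (Q u * indicator {0..s/\<alpha>} u) = ennreal (Q u)"
    proof (cases "u \<in> {0..s/\<alpha>}")
      case False
      show ?thesis
      proof (cases "u \<le> 0")
        case True then show ?thesis by (simp add: Q_def kd_nonpos)
      next
        case F2: False
        with False have "s/\<alpha> < u" by auto
        then have "(s-\<alpha> * u)/\<beta> \<le> 0" using al be by (simp add: field_simps)
        then show ?thesis using False by (simp add: Q_def kd_nonpos)
      qed
    qed simp
  qed
  finally show ?thesis by (simp add: c_def Q_def)
qed


end

context kum begin

lemma H_meas[measurable]: "H_II_plus \<alpha> \<beta> \<in> borel_measurable (lborel \<Otimes>\<^sub>M lborel)"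
  unfolding H_II_plus_def by measurable

lemma core:
  fixes h :: "real \<times> real \<Rightarrow> real"
  assumes hm[measurable]: "h \<in> borel_measurable (lborel \<Otimes>\<^sub>M lborel)" and h0: "\<And>z. h z \<ge> 0"
  shows "(\<integral>\<^sup>+z. ennreal (h (H_II_plus \<alpha> \<beta> z) * fX (fst z) * fY (snd z)) \<partial>(lborel \<Otimes>\<^sub>M lborel))
     = ennreal ((\<beta>/\<alpha>) powr lam) * (\<integral>\<^sup>+z. ennreal (h z * fU (fst z) * fV (snd z)) \<partial>(lborel \<Otimes>\<^sub>M lborel))"
proof -
  have hb: "h \<in> borel_measurable borel"
    using hm by (simp add: lborel_prod)
  have a0: "\<alpha> \<noteq> 0" and b0: "\<beta> \<noteq> 0" using al be by auto
  define c where "c = (\<beta>/\<alpha>) powr lam"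
  define F where "F x y = ennreal (h (H_II_plus \<alpha> \<beta> (x,y)) * fX x * fY y)" for x y
  define Q where "Q s u = ennreal (h (u, (s - \<alpha> * u)/\<beta>) * fU u * fV ((s - \<alpha> * u)/\<beta>))" for s u
  have Fm[measurable]: "(\<lambda>(x, s). F x ((s - \<alpha> * x)/\<beta>)) \<in> borel_measurable (lborel \<Otimes>\<^sub>M lborel)"
    unfolding F_def H_II_plus_def case_prod_conv by measurable
  have Qm[measurable]: "(\<lambda>(u, s). Q s u) \<in> borel_measurable (lborel \<Otimes>\<^sub>M lborel)"
    unfolding Q_def by measurable
  have Qm'[measurable]: "(\<lambda>(s, u). Q s u) \<in> borel_measurable (lborel \<Otimes>\<^sub>M lborel)"
    unfolding Q_def by measurable
  have "(\<integral>\<^sup>+z. ennreal (h (H_II_plus \<alpha> \<beta> z) * fX (fst z) * fY (snd z)) \<partial>(lborel \<Otimes>\<^sub>M lborel))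
      = (\<integral>\<^sup>+x. \<integral>\<^sup>+y. F x y \<partial>lborel \<partial>lborel)"
  proof -
    have Gm: "(\<lambda>z. ennreal (h (H_II_plus \<alpha> \<beta> z) * fX (fst z) * fY (snd z))) \<in> borel_measurable (lborel \<Otimes>\<^sub>M lborel)"
      unfolding H_II_plus_def split_beta by measurable
    show ?thesis unfolding F_def lborel.nn_integral_fst[OF Gm, symmetric] by simp
  qed
  also have "\<dots> = (\<integral>\<^sup>+x. ennreal (1/\<beta>) * (\<integral>\<^sup>+s. F x ((s - \<alpha> * x)/\<beta>) \<partial>lborel) \<partial>lborel)"
  proof (rule nn_integral_cong)
    fix x :: real
    have Fx[measurable]: "F x \<in> borel_measurable borel" unfolding F_def H_II_plus_def case_prod_conv by measurable
    have "(\<integral>\<^sup>+y. F x y \<partial>lborel) = ennreal \<bar>1/\<beta>\<bar> * (\<integral>\<^sup>+s. F x (- \<alpha> * x / \<beta> + 1/\<beta> * s) \<partial>lborel)"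
      by (rule nn_integral_real_affine) (use b0 in auto)
    also have "(\<lambda>s. - \<alpha> * x / \<beta> + 1/\<beta> * s) = (\<lambda>s. (s - \<alpha> * x)/\<beta>)"
      by (rule ext) (simp add: diff_divide_distrib)
    finally show "(\<integral>\<^sup>+y. F x y \<partial>lborel) = ennreal (1/\<beta>) * (\<integral>\<^sup>+s. F x ((s - \<alpha> * x)/\<beta>) \<partial>lborel)"
      using be by simp
  qed
  also have "\<dots> = ennreal (1/\<beta>) * (\<integral>\<^sup>+x. \<integral>\<^sup>+s. F x ((s - \<alpha> * x)/\<beta>) \<partial>lborel \<partial>lborel)"
    by (rule nn_integral_cmult) measurable
  also have "(\<integral>\<^sup>+x. \<integral>\<^sup>+s. F x ((s - \<alpha> * x)/\<beta>) \<partial>lborel \<partial>lborel)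
      = (\<integral>\<^sup>+s. \<integral>\<^sup>+x. F x ((s - \<alpha> * x)/\<beta>) \<partial>lborel \<partial>lborel)"
    by (rule lborel_pair.Fubini'[symmetric]) measurable
  also have "\<dots> = (\<integral>\<^sup>+s. ennreal c * (\<integral>\<^sup>+u. Q s u \<partial>lborel) \<partial>lborel)"
  proof (rule nn_integral_cong)
    fix s :: real
    show "(\<integral>\<^sup>+x. F x ((s - \<alpha> * x)/\<beta>) \<partial>lborel) = ennreal c * (\<integral>\<^sup>+u. Q s u \<partial>lborel)"
    proof (cases "s > 0")
      case True
      show ?thesis unfolding F_def Q_def c_def by (rule mob[OF hb h0 True])
    next
      case False
      have "F x ((s - \<alpha> * x)/\<beta>) = 0" for x
      proof (cases "x \<le> 0")
        case True then show ?thesis by (simp add: F_def kd_nonpos)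
      next
        case F2: False
        have "\<alpha> * x > 0" using F2 al by simp
        then have "(s - \<alpha> * x)/\<beta> \<le> 0" using False be by (intro divide_nonpos_pos) auto
        then show ?thesis by (simp add: F_def kd_nonpos)
      qed
      moreover have "Q s u = 0" for u
      proof (cases "u \<le> 0")
        case True then show ?thesis by (simp add: Q_def kd_nonpos)
      next
        case F2: False
        have "\<alpha> * u > 0" using F2 al by simp
        then have "(s - \<alpha> * u)/\<beta> \<le> 0" using False be by (intro divide_nonpos_pos) auto
        then show ?thesis by (simp add: Q_def kd_nonpos)
      qed
      ultimately show ?thesis by simp
    qed
  qed
  also have "\<dots> = ennreal c * (\<integral>\<^sup>+s. \<integral>\<^sup>+u. Q s u \<partial>lborel \<partial>lborel)"
    by (rule nn_integral_cmult) measurable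
  also have "(\<integral>\<^sup>+s. \<integral>\<^sup>+u. Q s u \<partial>lborel \<partial>lborel) = (\<integral>\<^sup>+u. \<integral>\<^sup>+s. Q s u \<partial>lborel \<partial>lborel)"
    by (rule lborel_pair.Fubini'[symmetric]) measurable
  also have "\<dots> = (\<integral>\<^sup>+u. ennreal \<beta> * (\<integral>\<^sup>+v. ennreal (h (u, v) * fU u * fV v) \<partial>lborel) \<partial>lborel)"
  proof (rule nn_integral_cong)
    fix u :: real
    have Qu[measurable]: "(\<lambda>s. Q s u) \<in> borel_measurable borel" unfolding Q_def by measurable
    have "(\<integral>\<^sup>+s. Q s u \<partial>lborel) = ennreal \<bar>\<beta>\<bar> * (\<integral>\<^sup>+v. Q (\<alpha> * u + \<beta> * v) u \<partial>lborel)"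
      by (rule nn_integral_real_affine) (use b0 in auto)
    also have "(\<lambda>v. Q (\<alpha> * u + \<beta> * v) u) = (\<lambda>v. ennreal (h (u, v) * fU u * fV v))"
      by (rule ext) (simp add: Q_def b0)
    finally show "(\<integral>\<^sup>+s. Q s u \<partial>lborel) = ennreal \<beta> * (\<integral>\<^sup>+v. ennreal (h (u, v) * fU u * fV v) \<partial>lborel)"
      using be by simp
  qed
  also have "\<dots> = ennreal \<beta> * (\<integral>\<^sup>+u. \<integral>\<^sup>+v. ennreal (h (u, v) * fU u * fV v) \<partial>lborel \<partial>lborel)"
    by (rule nn_integral_cmult) measurable
  also have "(\<integral>\<^sup>+u. \<integral>\<^sup>+v. ennreal (h (u, v) * fU u * fV v) \<partial>lborel \<partial>lborel)
      = (\<integral>\<^sup>+z. ennreal (h z * fU (fst z) * fV (snd z)) \<partial>(lborel \<Otimes>\<^sub>M lborel))"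
    by (subst lborel.nn_integral_fst[symmetric]) simp_all
  finally have "(\<integral>\<^sup>+z. ennreal (h (H_II_plus \<alpha> \<beta> z) * fX (fst z) * fY (snd z)) \<partial>(lborel \<Otimes>\<^sub>M lborel))
     = (ennreal (1/\<beta>) * ennreal \<beta>) * ennreal c * (\<integral>\<^sup>+z. ennreal (h z * fU (fst z) * fV (snd z)) \<partial>(lborel \<Otimes>\<^sub>M lborel))"
    by (simp add: ac_simps)
  also have "ennreal (1/\<beta>) * ennreal \<beta> = 1"
    using be by (simp add: ennreal_mult[symmetric])
  finally show ?thesis by (simp add: c_def)
qed

end




lemma distr_pair_snd':
  assumes N: "prob_space N" and M: "sigma_finite_measure M"
  shows "distr (N \<Otimes>\<^sub>M M) M snd = M"
proof (intro measure_eqI)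
  interpret N: prob_space N by fact
  interpret M: sigma_finite_measure M by fact
  fix A assume A: "A \<in> sets (distr (N \<Otimes>\<^sub>M M) M snd)"
  from A have "emeasure (distr (N \<Otimes>\<^sub>M M) M snd) A = emeasure (N \<Otimes>\<^sub>M M) (space N \<times> A)"
    by (auto simp add: emeasure_distr space_pair_measure dest: sets.sets_into_space intro!: arg_cong2[where f=emeasure])
  with A show "emeasure (distr (N \<Otimes>\<^sub>M M) M snd) A = emeasure M A"
    by (simp add: M.emeasure_pair_measure_Times N.emeasure_space_1)
qed simp

lemma kummer_pos:
  assumes "prob_space (kummer2 l a b p q)"
  shows "0 < (\<integral>t. kummer2_dens l a b p q t \<partial>lborel)"
proof -
  let ?C = "\<integral>t. kummer2_dens l a b p q t \<partial>lborel"
  have "?C \<ge> 0" by (rule integral_nonneg_AE) (simp add: kd_nonneg)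
  moreover have "?C \<noteq> 0"
  proof
    assume C: "?C = 0"
    have "emeasure (kummer2 l a b p q) UNIV = 0"
      unfolding kummer2_def C by (simp add: emeasure_density)
    moreover have "emeasure (kummer2 l a b p q) (space (kummer2 l a b p q)) = 1"
      using prob_space.emeasure_space_1[OF assms] .
    ultimately show False by (simp add: kummer2_def)
  qed
  ultimately show ?thesis by simp
qed

lemma enn3: "0 \<le> a \<Longrightarrow> 0 \<le> b \<Longrightarrow> 0 \<le> c \<Longrightarrow> ennreal a * ennreal b * ennreal (c::real) = ennreal (a*b*c)"
  by (simp add: ennreal_mult)

lemma enn_div: "0 \<le> (y::real) \<Longrightarrow> 0 < c \<Longrightarrow> ennreal (y / c) = ennreal (1/c) * ennreal y"
  by (subst ennreal_mult[symmetric]) auto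

lemma prod_dens:
  assumes pY: "prob_space (density lborel g)" and [measurable]: "f \<in> borel_measurable borel" "g \<in> borel_measurable borel"
  shows "density lborel f \<Otimes>\<^sub>M density lborel g = density (lborel \<Otimes>\<^sub>M lborel) (\<lambda>z. f (fst z) * g (snd z))"
proof -
  have "density lborel f \<Otimes>\<^sub>M density lborel g = density (lborel \<Otimes>\<^sub>M lborel) (\<lambda>(x,y). f x * g y)"
    by (rule pair_measure_density) (auto intro: lborel.sigma_finite_measure_axioms prob_space_imp_sigma_finite pY)
  also have "(\<lambda>(x,y). f x * g y) = (\<lambda>z. f (fst z) * g (snd z))" by auto
  finally show ?thesis .
qed

lemma main:
  fixes M :: "'s measure" and X Y :: "'s \<Rightarrow> real"
    and \<alpha> \<beta> lam a b :: real
  assumes "prob_space M"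
    and "\<alpha> > 0" and "\<beta> > 0" and "a > 0" and "b > 0"
    and "- b < lam / 2" and "lam / 2 < b"
    and "X \<in> borel_measurable M" and "Y \<in> borel_measurable M"
    and "prob_space.indep_var M borel X borel Y"
    and "distr M lborel X = kummer2 lam a b \<alpha> 1"
    and "distr M lborel Y = kummer2 (- lam) a b \<beta> 1"
  shows "prob_space.indep_var M borel (\<lambda>\<omega>. fst (H_II_plus \<alpha> \<beta> (X \<omega>, Y \<omega>)))
                                 borel (\<lambda>\<omega>. snd (H_II_plus \<alpha> \<beta> (X \<omega>, Y \<omega>)))
       \<and> distr M lborel (\<lambda>\<omega>. fst (H_II_plus \<alpha> \<beta> (X \<omega>, Y \<omega>))) = kummer2 (- lam) a b \<alpha> 1
       \<and> distr M lborel (\<lambda>\<omega>. snd (H_II_plus \<alpha> \<beta> (X \<omega>, Y \<omega>))) = kummer2 lam a b \<beta> 1"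
proof -
  interpret P: prob_space M by fact
  interpret K: kum \<alpha> \<beta> by unfold_locales (use assms in auto)
  have Xm[measurable]: "X \<in> borel_measurable M" and Ym[measurable]: "Y \<in> borel_measurable M" using assms by auto
  define fX where "fX = kummer2_dens lam a b \<alpha> 1"
  define fY where "fY = kummer2_dens (-lam) a b \<beta> 1"
  define fU where "fU = kummer2_dens (-lam) a b \<alpha> 1"
  define fV where "fV = kummer2_dens lam a b \<beta> 1"
  have fm[measurable]: "fX \<in> borel_measurable borel" "fY \<in> borel_measurable borel"
    "fU \<in> borel_measurable borel" "fV \<in> borel_measurable borel" by (simp_all add: fX_def fY_def fU_def fV_def)
  have fnn: "fX x \<ge> 0" "fY x \<ge> 0" "fU x \<ge> 0" "fV x \<ge> 0" for x
    by (simp_all add: fX_def fY_def fU_def fV_def kd_nonneg)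
  define Cx where "Cx = (\<integral>t. fX t \<partial>lborel)"
  define Cy where "Cy = (\<integral>t. fY t \<partial>lborel)"
  define Cu where "Cu = (\<integral>t. fU t \<partial>lborel)"
  define Cv where "Cv = (\<integral>t. fV t \<partial>lborel)"
  define c where "c = (\<beta>/\<alpha>) powr lam"
  have KX: "kummer2 lam a b \<alpha> 1 = density lborel (\<lambda>x. ennreal (fX x / Cx))"
    by (simp add: kummer2_def fX_def Cx_def)
  have KY: "kummer2 (-lam) a b \<beta> 1 = density lborel (\<lambda>x. ennreal (fY x / Cy))"
    by (simp add: kummer2_def fY_def Cy_def)
  have KU: "kummer2 (-lam) a b \<alpha> 1 = density lborel (\<lambda>x. ennreal (fU x / Cu))"
    by (simp add: kummer2_def fU_def Cu_def)
  have KV: "kummer2 lam a b \<beta> 1 = density lborel (\<lambda>x. ennreal (fV x / Cv))"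
    by (simp add: kummer2_def fV_def Cv_def)
  have pX: "prob_space (kummer2 lam a b \<alpha> 1)"
    using P.prob_space_distr[of X lborel] assms(11) by simp
  have pY: "prob_space (kummer2 (-lam) a b \<beta> 1)"
    using P.prob_space_distr[of Y lborel] assms(12) by simp
  have Cx: "0 < Cx" using kummer_pos[OF pX] by (simp add: Cx_def fX_def)
  have Cy: "0 < Cy" using kummer_pos[OF pY] by (simp add: Cy_def fY_def)
  have D: "distr M (lborel \<Otimes>\<^sub>M lborel) (\<lambda>\<omega>. (X \<omega>, Y \<omega>))
      = density (lborel \<Otimes>\<^sub>M lborel) (\<lambda>z. ennreal (fX (fst z) / Cx) * ennreal (fY (snd z) / Cy))"
  proof -
    have "distr M borel X \<Otimes>\<^sub>M distr M borel Y = distr M (borel \<Otimes>\<^sub>M borel) (\<lambda>\<omega>. (X \<omega>, Y \<omega>))"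
      using assms(10) P.indep_var_distribution_eq by blast
    moreover have "distr M borel X = distr M lborel X" by (rule distr_cong) simp_all
    moreover have "distr M borel Y = distr M lborel Y" by (rule distr_cong) simp_all
    moreover have "distr M (borel \<Otimes>\<^sub>M borel) (\<lambda>\<omega>. (X \<omega>, Y \<omega>)) = distr M (lborel \<Otimes>\<^sub>M lborel) (\<lambda>\<omega>. (X \<omega>, Y \<omega>))"
      by (rule distr_cong) (simp_all cong: sets_pair_measure_cong)
    ultimately have "distr M (lborel \<Otimes>\<^sub>M lborel) (\<lambda>\<omega>. (X \<omega>, Y \<omega>)) = kummer2 lam a b \<alpha> 1 \<Otimes>\<^sub>M kummer2 (-lam) a b \<beta> 1"
      using assms(11,12) by simp
    also have "\<dots> = density (lborel \<Otimes>\<^sub>M lborel) (\<lambda>z. ennreal (fX (fst z) / Cx) * ennreal (fY (snd z) / Cy))"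
      unfolding KX KY by (rule prod_dens) (use pY KY in auto)
    finally show ?thesis .
  qed
  define k where "k = c / (Cx * Cy)"
  have k: "k > 0" using Cx Cy assms(2,3) by (simp add: k_def c_def)
  have Hm[measurable]: "H_II_plus \<alpha> \<beta> \<in> lborel \<Otimes>\<^sub>M lborel \<rightarrow>\<^sub>M lborel \<Otimes>\<^sub>M lborel"
    unfolding H_II_plus_def split_beta by measurable
  have HXm[measurable]: "(\<lambda>\<omega>. H_II_plus \<alpha> \<beta> (X \<omega>, Y \<omega>)) \<in> M \<rightarrow>\<^sub>M lborel \<Otimes>\<^sub>M lborel"
    unfolding H_II_plus_def case_prod_conv by measurable
  have E: "distr M (lborel \<Otimes>\<^sub>M lborel) (\<lambda>\<omega>. H_II_plus \<alpha> \<beta> (X \<omega>, Y \<omega>))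
      = density (lborel \<Otimes>\<^sub>M lborel) (\<lambda>z. ennreal k * ennreal (fU (fst z) * fV (snd z)))"
  proof (rule measure_eqI)
    fix A assume "A \<in> sets (distr M (lborel \<Otimes>\<^sub>M lborel) (\<lambda>\<omega>. H_II_plus \<alpha> \<beta> (X \<omega>, Y \<omega>)))"
    then have A[measurable]: "A \<in> sets (lborel \<Otimes>\<^sub>M lborel)" by simp
    then have A': "A \<in> sets (borel \<Otimes>\<^sub>M borel)" by simp
    have "distr M (lborel \<Otimes>\<^sub>M lborel) (\<lambda>\<omega>. H_II_plus \<alpha> \<beta> (X \<omega>, Y \<omega>))
        = distr (distr M (lborel \<Otimes>\<^sub>M lborel) (\<lambda>\<omega>. (X \<omega>, Y \<omega>))) (lborel \<Otimes>\<^sub>M lborel) (H_II_plus \<alpha> \<beta>)"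
      by (subst distr_distr) (simp_all add: comp_def)
    then have "emeasure (distr M (lborel \<Otimes>\<^sub>M lborel) (\<lambda>\<omega>. H_II_plus \<alpha> \<beta> (X \<omega>, Y \<omega>))) A
        = (\<integral>\<^sup>+z. indicator A z \<partial>distr (density (lborel \<Otimes>\<^sub>M lborel) (\<lambda>z. ennreal (fX (fst z) / Cx) * ennreal (fY (snd z) / Cy))) (lborel \<Otimes>\<^sub>M lborel) (H_II_plus \<alpha> \<beta>))"
      by (subst nn_integral_indicator) (simp_all add: D A')
    also have "\<dots> = (\<integral>\<^sup>+z. ennreal (1/(Cx*Cy)) * ennreal (indicator A (H_II_plus \<alpha> \<beta> z) * fX (fst z) * fY (snd z)) \<partial>(lborel \<Otimes>\<^sub>M lborel))"
    proof -
      have "(\<integral>\<^sup>+z. indicator A z \<partial>distr (density (lborel \<Otimes>\<^sub>M lborel) (\<lambda>z. ennreal (fX (fst z) / Cx) * ennreal (fY (snd z) / Cy))) (lborel \<Otimes>\<^sub>M lborel) (H_II_plus \<alpha> \<beta>))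
         = (\<integral>\<^sup>+z. indicator A (H_II_plus \<alpha> \<beta> z) \<partial>density (lborel \<Otimes>\<^sub>M lborel) (\<lambda>z. ennreal (fX (fst z) / Cx) * ennreal (fY (snd z) / Cy)))"
        by (subst nn_integral_distr) simp_all
      also have "\<dots> = (\<integral>\<^sup>+z. ennreal (fX (fst z) / Cx) * ennreal (fY (snd z) / Cy) * indicator A (H_II_plus \<alpha> \<beta> z) \<partial>(lborel \<Otimes>\<^sub>M lborel))"
        by (subst nn_integral_density) simp_all
      also have "\<dots> = (\<integral>\<^sup>+z. ennreal (1/(Cx*Cy)) * ennreal (indicator A (H_II_plus \<alpha> \<beta> z) * fX (fst z) * fY (snd z)) \<partial>(lborel \<Otimes>\<^sub>M lborel))"
      proof (rule nn_integral_cong)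
        fix z :: "real \<times> real"
        have "ennreal (fX (fst z) / Cx) * ennreal (fY (snd z) / Cy) * indicator A (H_II_plus \<alpha> \<beta> z)
           = ennreal (fX (fst z) / Cx * (fY (snd z) / Cy) * indicator A (H_II_plus \<alpha> \<beta> z))"
        proof -
          have "ennreal (fX (fst z) / Cx) * ennreal (fY (snd z) / Cy) * indicator A (H_II_plus \<alpha> \<beta> z)
            = ennreal (fX (fst z) / Cx) * ennreal (fY (snd z) / Cy) * ennreal (indicator A (H_II_plus \<alpha> \<beta> z))"
            by (simp only: ennreal_indicator)
          also have "\<dots> = ennreal (fX (fst z) / Cx * (fY (snd z) / Cy) * indicator A (H_II_plus \<alpha> \<beta> z))"
            by (intro enn3 divide_nonneg_pos fnn Cx Cy) simp
          finally show ?thesis .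
        qed
        also have "fX (fst z) / Cx * (fY (snd z) / Cy) * indicator A (H_II_plus \<alpha> \<beta> z)
           = 1/(Cx*Cy) * (indicator A (H_II_plus \<alpha> \<beta> z) * fX (fst z) * fY (snd z))"
          by (simp add: field_simps)
        also have "ennreal \<dots> = ennreal (1/(Cx*Cy)) * ennreal (indicator A (H_II_plus \<alpha> \<beta> z) * fX (fst z) * fY (snd z))"
          using Cx Cy by (intro ennreal_mult') simp
        finally show "ennreal (fX (fst z) / Cx) * ennreal (fY (snd z) / Cy) * indicator A (H_II_plus \<alpha> \<beta> z)
           = ennreal (1/(Cx*Cy)) * ennreal (indicator A (H_II_plus \<alpha> \<beta> z) * fX (fst z) * fY (snd z))" .
      qed
      finally show ?thesis .
    qed
    also have "\<dots> = ennreal (1/(Cx*Cy)) * (\<integral>\<^sup>+z. ennreal (indicator A (H_II_plus \<alpha> \<beta> z) * fX (fst z) * fY (snd z)) \<partial>(lborel \<Otimes>\<^sub>M lborel))"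
      by (rule nn_integral_cmult) simp
    also have "(\<integral>\<^sup>+z. ennreal (indicator A (H_II_plus \<alpha> \<beta> z) * fX (fst z) * fY (snd z)) \<partial>(lborel \<Otimes>\<^sub>M lborel))
        = ennreal c * (\<integral>\<^sup>+z. ennreal (indicator A z * fU (fst z) * fV (snd z)) \<partial>(lborel \<Otimes>\<^sub>M lborel))"
      unfolding fX_def fY_def fU_def fV_def c_def by (rule K.core) simp_all
    also have "ennreal (1/(Cx*Cy)) * (ennreal c * (\<integral>\<^sup>+z. ennreal (indicator A z * fU (fst z) * fV (snd z)) \<partial>(lborel \<Otimes>\<^sub>M lborel)))
        = (\<integral>\<^sup>+z. ennreal k * ennreal (fU (fst z) * fV (snd z)) * indicator A z \<partial>(lborel \<Otimes>\<^sub>M lborel))"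
    proof -
      define I where "I = (\<integral>\<^sup>+z. ennreal (indicator A z * fU (fst z) * fV (snd z)) \<partial>(lborel \<Otimes>\<^sub>M lborel))"
      have kk: "ennreal (1/(Cx*Cy)) * ennreal c = ennreal k"
        using Cx Cy by (simp add: k_def c_def ennreal_mult[symmetric])
      have ii: "(\<integral>\<^sup>+z. ennreal k * ennreal (fU (fst z) * fV (snd z)) * indicator A z \<partial>(lborel \<Otimes>\<^sub>M lborel))
          = ennreal k * (\<integral>\<^sup>+z. ennreal (indicator A z * fU (fst z) * fV (snd z)) \<partial>(lborel \<Otimes>\<^sub>M lborel))"
        by (subst nn_integral_cmult[symmetric]) (simp_all add: ennreal_indicator[symmetric] ennreal_mult'' fnn ac_simps)
      have "ennreal (1/(Cx*Cy)) * (ennreal c * I) = (ennreal (1/(Cx*Cy)) * ennreal c) * I"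
        by (simp only: mult.assoc)
      also have "\<dots> = ennreal k * I" by (simp only: kk)
      finally show ?thesis unfolding ii I_def .
    qed
    also have "\<dots> = emeasure (density (lborel \<Otimes>\<^sub>M lborel) (\<lambda>z. ennreal k * ennreal (fU (fst z) * fV (snd z)))) A"
      by (subst emeasure_density) (simp_all add: A')
    finally show "emeasure (distr M (lborel \<Otimes>\<^sub>M lborel) (\<lambda>\<omega>. H_II_plus \<alpha> \<beta> (X \<omega>, Y \<omega>))) A
      = emeasure (density (lborel \<Otimes>\<^sub>M lborel) (\<lambda>z. ennreal k * ennreal (fU (fst z) * fV (snd z)))) A" .
  qed simp

  define HX where "HX = (\<lambda>\<omega>. H_II_plus \<alpha> \<beta> (X \<omega>, Y \<omega>))"
  have HXm'[measurable]: "HX \<in> M \<rightarrow>\<^sub>M lborel \<Otimes>\<^sub>M lborel" unfolding HX_def by (rule HXm)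
  have pE: "prob_space (distr M (lborel \<Otimes>\<^sub>M lborel) HX)" by (rule P.prob_space_distr) simp
  define IU where "IU = (\<integral>\<^sup>+u. ennreal (fU u) \<partial>lborel)"
  define IV where "IV = (\<integral>\<^sup>+u. ennreal (fV u) \<partial>lborel)"
  have tot: "ennreal k * IU * IV = 1"
  proof -
    have "1 = emeasure (density (lborel \<Otimes>\<^sub>M lborel) (\<lambda>z. ennreal k * ennreal (fU (fst z) * fV (snd z)))) (space (lborel \<Otimes>\<^sub>M lborel))"
      using prob_space.emeasure_space_1[OF pE] unfolding HX_def E by simp
    also have "\<dots> = (\<integral>\<^sup>+z. ennreal k * ennreal (fU (fst z) * fV (snd z)) \<partial>(lborel \<Otimes>\<^sub>M lborel))"
      by (subst emeasure_density[OF _ sets.top]) (auto intro!: nn_integral_cong simp: space_pair_measure)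
    also have "\<dots> = ennreal k * (\<integral>\<^sup>+z. ennreal (fU (fst z)) * ennreal (fV (snd z)) \<partial>(lborel \<Otimes>\<^sub>M lborel))"
      by (subst nn_integral_cmult[symmetric]) (simp_all add: ennreal_mult fnn)
    also have "(\<integral>\<^sup>+z. ennreal (fU (fst z)) * ennreal (fV (snd z)) \<partial>(lborel \<Otimes>\<^sub>M lborel))
        = (\<integral>\<^sup>+u. \<integral>\<^sup>+v. ennreal (fU u) * ennreal (fV v) \<partial>lborel \<partial>lborel)"
      by (subst lborel.nn_integral_fst[symmetric]) simp_all
    also have "\<dots> = (\<integral>\<^sup>+u. ennreal (fU u) * IV \<partial>lborel)"
      by (simp add: nn_integral_cmult IV_def)
    also have "\<dots> = IU * IV"
      by (simp add: nn_integral_multc IU_def)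
    finally show ?thesis by (simp add: mult.assoc)
  qed
  have IU0: "IU \<noteq> 0" and IV0: "IV \<noteq> 0" using tot by auto
  have kn0: "ennreal k \<noteq> 0" using k by simp
  have IUt: "IU \<noteq> \<top>"
  proof
    assume "IU = \<top>"
    then have "ennreal k * IU * IV = \<top>" using kn0 IV0 by (simp add: ennreal_mult_top ennreal_top_mult)
    then show False using tot by simp
  qed
  have IVt: "IV \<noteq> \<top>"
  proof
    assume "IV = \<top>"
    then have "ennreal k * IU * IV = \<top>" using kn0 IU0 by (simp add: ennreal_mult_top ennreal_top_mult)
    then show False using tot by simp
  qed
  have iU: "integrable lborel fU"
    by (rule integrableI_bounded) (use IUt in \<open>simp_all add: IU_def fnn less_top[symmetric]\<close>)
  have iV: "integrable lborel fV"
    by (rule integrableI_bounded) (use IVt in \<open>simp_all add: IV_def fnn less_top[symmetric]\<close>)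
  have IUC: "IU = ennreal Cu" unfolding IU_def Cu_def by (rule nn_integral_eq_integral[OF iU]) (simp add: fnn)
  have IVC: "IV = ennreal Cv" unfolding IV_def Cv_def by (rule nn_integral_eq_integral[OF iV]) (simp add: fnn)
  have Cu0: "Cu \<ge> 0" unfolding Cu_def by (rule integral_nonneg_AE) (simp add: fnn)
  have Cv0: "Cv \<ge> 0" unfolding Cv_def by (rule integral_nonneg_AE) (simp add: fnn)
  have Cu: "Cu > 0" using Cu0 IU0 IUC by (cases "Cu = 0") auto
  have Cv: "Cv > 0" using Cv0 IV0 IVC by (cases "Cv = 0") auto
  have kCC: "k * Cu * Cv = 1"
  proof -
    have "ennreal (k * Cu * Cv) = 1" using tot k Cu Cv unfolding IUC IVC by (simp add: ennreal_mult)
    then show ?thesis using k Cu Cv by simp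
  qed
  have pV: "prob_space (density lborel (\<lambda>x. ennreal (fV x / Cv)))"
  proof (rule prob_spaceI)
    have "emeasure (density lborel (\<lambda>x. ennreal (fV x / Cv))) (space (density lborel (\<lambda>x. ennreal (fV x / Cv))))
        = (\<integral>\<^sup>+x. ennreal (1/Cv) * ennreal (fV x) \<partial>lborel)"
      by (subst emeasure_density) (auto intro!: nn_integral_cong simp: enn_div[of "fV _"] fnn Cv)
    also have "\<dots> = ennreal (1/Cv) * IV" unfolding IV_def by (rule nn_integral_cmult) simp
    also have "\<dots> = 1" unfolding IVC using Cv by (simp add: ennreal_mult[symmetric])
    finally show "emeasure (density lborel (\<lambda>x. ennreal (fV x / Cv))) (space (density lborel (\<lambda>x. ennreal (fV x / Cv)))) = 1" .
  qed
  have pU: "prob_space (density lborel (\<lambda>x. ennreal (fU x / Cu)))"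
  proof (rule prob_spaceI)
    have "emeasure (density lborel (\<lambda>x. ennreal (fU x / Cu))) (space (density lborel (\<lambda>x. ennreal (fU x / Cu))))
        = (\<integral>\<^sup>+x. ennreal (1/Cu) * ennreal (fU x) \<partial>lborel)"
      by (subst emeasure_density) (auto intro!: nn_integral_cong simp: enn_div[of "fU _"] fnn Cu)
    also have "\<dots> = ennreal (1/Cu) * IU" unfolding IU_def by (rule nn_integral_cmult) simp
    also have "\<dots> = 1" unfolding IUC using Cu by (simp add: ennreal_mult[symmetric])
    finally show "emeasure (density lborel (\<lambda>x. ennreal (fU x / Cu))) (space (density lborel (\<lambda>x. ennreal (fU x / Cu)))) = 1" .
  qed
  have KUV: "distr M (lborel \<Otimes>\<^sub>M lborel) HX = kummer2 (-lam) a b \<alpha> 1 \<Otimes>\<^sub>M kummer2 lam a b \<beta> 1"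
  proof -
    have "kummer2 (-lam) a b \<alpha> 1 \<Otimes>\<^sub>M kummer2 lam a b \<beta> 1
        = density (lborel \<Otimes>\<^sub>M lborel) (\<lambda>z. ennreal (fU (fst z) / Cu) * ennreal (fV (snd z) / Cv))"
      unfolding KU KV by (rule prod_dens[OF pV]) simp_all
    also have "(\<lambda>z. ennreal (fU (fst z) / Cu) * ennreal (fV (snd z) / Cv)) = (\<lambda>z. ennreal k * ennreal (fU (fst z) * fV (snd z)))"
    proof
      fix z :: "real \<times> real"
      have kk: "k = 1 / (Cu * Cv)" using kCC Cu Cv by (simp add: field_simps)
      have "ennreal (fU (fst z) / Cu) * ennreal (fV (snd z) / Cv) = ennreal (fU (fst z) / Cu * (fV (snd z) / Cv))"
        by (intro ennreal_mult[symmetric] divide_nonneg_pos fnn Cu Cv)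
      also have "fU (fst z) / Cu * (fV (snd z) / Cv) = k * (fU (fst z) * fV (snd z))" unfolding kk by simp
      also have "ennreal \<dots> = ennreal k * ennreal (fU (fst z) * fV (snd z))" using k by (intro ennreal_mult') simp
      finally show "ennreal (fU (fst z) / Cu) * ennreal (fV (snd z) / Cv) = ennreal k * ennreal (fU (fst z) * fV (snd z))" .
    qed
    finally show ?thesis unfolding HX_def E by simp
  qed
  have sKU: "sets (kummer2 (-lam) a b \<alpha> 1) = sets lborel" unfolding KU by simp
  have sKV: "sets (kummer2 lam a b \<beta> 1) = sets lborel" unfolding KV by simp
  have dU: "distr M lborel (\<lambda>\<omega>. fst (HX \<omega>)) = kummer2 (-lam) a b \<alpha> 1"
  proof -
    have "distr M lborel (\<lambda>\<omega>. fst (HX \<omega>)) = distr (distr M (lborel \<Otimes>\<^sub>M lborel) HX) lborel fst"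
      by (subst distr_distr) (simp_all add: comp_def)
    also have "\<dots> = distr (kummer2 (-lam) a b \<alpha> 1 \<Otimes>\<^sub>M kummer2 lam a b \<beta> 1) (kummer2 (-lam) a b \<alpha> 1) fst"
      unfolding KUV by (rule distr_cong) (simp_all add: sKU)
    also have "\<dots> = kummer2 (-lam) a b \<alpha> 1"
      using pV unfolding KV[symmetric] by (rule prob_space.distr_pair_fst)
    finally show ?thesis .
  qed
  have dV: "distr M lborel (\<lambda>\<omega>. snd (HX \<omega>)) = kummer2 lam a b \<beta> 1"
  proof -
    have "distr M lborel (\<lambda>\<omega>. snd (HX \<omega>)) = distr (distr M (lborel \<Otimes>\<^sub>M lborel) HX) lborel snd"
      by (subst distr_distr) (simp_all add: comp_def)
    also have "\<dots> = distr (kummer2 (-lam) a b \<alpha> 1 \<Otimes>\<^sub>M kummer2 lam a b \<beta> 1) (kummer2 lam a b \<beta> 1) snd"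
      unfolding KUV by (rule distr_cong) (simp_all add: sKV)
    also have "\<dots> = kummer2 lam a b \<beta> 1"
      by (rule distr_pair_snd') (use pU pV KU KV prob_space_imp_sigma_finite in auto)
    finally show ?thesis .
  qed
  have ind: "P.indep_var borel (\<lambda>\<omega>. fst (HX \<omega>)) borel (\<lambda>\<omega>. snd (HX \<omega>))"
  proof -
    have "distr M borel (\<lambda>\<omega>. fst (HX \<omega>)) = distr M lborel (\<lambda>\<omega>. fst (HX \<omega>))" by (rule distr_cong) simp_all
    moreover have "distr M borel (\<lambda>\<omega>. snd (HX \<omega>)) = distr M lborel (\<lambda>\<omega>. snd (HX \<omega>))" by (rule distr_cong) simp_all
    moreover have "distr M (borel \<Otimes>\<^sub>M borel) (\<lambda>\<omega>. (fst (HX \<omega>), snd (HX \<omega>))) = distr M (lborel \<Otimes>\<^sub>M lborel) HX"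
      by (rule distr_cong) (simp_all cong: sets_pair_measure_cong)
    ultimately have "distr M borel (\<lambda>\<omega>. fst (HX \<omega>)) \<Otimes>\<^sub>M distr M borel (\<lambda>\<omega>. snd (HX \<omega>))
        = distr M (borel \<Otimes>\<^sub>M borel) (\<lambda>\<omega>. (fst (HX \<omega>), snd (HX \<omega>)))"
      using dU dV KUV by simp
    moreover have "(\<lambda>\<omega>. fst (HX \<omega>)) \<in> measurable M borel"
      using measurable_compose[OF HXm' measurable_fst] by (simp add: comp_def)
    moreover have "(\<lambda>\<omega>. snd (HX \<omega>)) \<in> measurable M borel"
      using measurable_compose[OF HXm' measurable_snd] by (simp add: comp_def)
    ultimately show ?thesis using P.indep_var_distribution_eq by blast
  qed
  show ?thesis using ind dU dV unfolding HX_def by simp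
qed


theorem theorem1p1:
  fixes M :: "'s measure" and X Y :: "'s \<Rightarrow> real"
    and \<alpha> \<beta> lam a b :: real
  assumes "prob_space M"
    and "\<alpha> > 0" and "\<beta> > 0" and "a > 0" and "b > 0"
    and "- b < lam / 2" and "lam / 2 < b"
    and "X \<in> borel_measurable M" and "Y \<in> borel_measurable M"
    and "prob_space.indep_var M borel X borel Y"
    and "distr M lborel X = kummer2 lam a b \<alpha> 1"
    and "distr M lborel Y = kummer2 (- lam) a b \<beta> 1"
  shows "prob_space.indep_var M borel (\<lambda>\<omega>. fst (H_II_plus \<alpha> \<beta> (X \<omega>, Y \<omega>)))
                                 borel (\<lambda>\<omega>. snd (H_II_plus \<alpha> \<beta> (X \<omega>, Y \<omega>)))
       \<and> distr M lborel (\<lambda>\<omega>. fst (H_II_plus \<alpha> \<beta> (X \<omega>, Y \<omega>))) = kummer2 (- lam) a b \<alpha> 1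
       \<and> distr M lborel (\<lambda>\<omega>. snd (H_II_plus \<alpha> \<beta> (X \<omega>, Y \<omega>))) = kummer2 lam a b \<beta> 1"
  using assms by (rule main)

end
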